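(* Let $n\ge 1$ and for sections $X_1,\dots,X_h$ define \[ \mu_n(X_1,\dots,X_h)=\sum_{(a_1,\dots,a_h)} \mu\big([\pi^{a_1}]_{\mathscr{F}^{\mathrm{univ}}}(X_1),\dots,[\pi^{a_h}]_{\mathscr{F}^{\mathrm{univ}}}(X_h)\big), \] the sum over integer tuples with $0\le a_i\le n-1$ and $\sum_i a_i=(h-1)(n-1)$ (so that $\mu_0$ is the empty sum $0$). Then for sections $X_1,\dots,X_h$ of $\mathscr{F}^{\mathrm{univ}}[\pi^n]$ over an $\mathcal{A}$-algebra $R$ we have \[ [\pi]_{\mathrm{LT}}(\mu_n(X_1,\dots,X_h)) = \mu_{n-1}\big([\pi]_{\mathscr{F}^{\mathrm{univ}}}(X_1),\dots,[\pi]_{\mathscr{F}^{\mathrm{univ}}}(X_h)\big). \] In particular $\mu_n(X_1,\dots,X_h)$ is a section of $\mathrm{LT}[\pi^n]$.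
   Context: $F=k((\pi))$, $k=\mathbf{F}_q$, $\mathcal{O}_F=k[[\pi]]$, $h\ge1$, $\mathcal{A}=\bar k[[\pi]][[u_1,\dots,u_{h-1}]]$. $\mathscr{F}^{\mathrm{univ}}$ over $\mathcal{A}$ has additive law, $[\zeta](X)=\zeta X$ ($\zeta\in k$), $[\pi](X)=\pi X+u_1X^q+\dots+u_{h-1}X^{q^{h-1}}+X^{q^h}$, and $[\pi^a]$ is the $a$-fold iterate. $\mathrm{LT}$ has additive law, $[\zeta](X)=\zeta X$, $[\pi](X)=\pi X+(-1)^{h-1}X^q$. A section of $G[\pi^n]$ over $R$ is an $s\in R$ with $[\pi^n]_G(s)=0$. $\mu(X_1,\dots,X_h)=\det(X_i^{q^j})_{1\le i\le h,0\le j\le h-1}$ is the Moore determinant. *)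

theory Defs
  imports "Jordan_Normal_Form.Determinant"
begin

text \<open>Parameters: h (height), q (size of the residue field k = F_q), and the images
  in the algebra R of the elements pe and u_1, ..., u_(h-1) of the ring A
  (u is indexed by 1..h-1; other values of u are irrelevant).\<close>

text \<open>[pe] for the universal formal O_F-module F^univ (additive group law).\<close>
definition univ_pi :: "nat \<Rightarrow> nat \<Rightarrow> 'a::comm_ring_1 \<Rightarrow> (nat \<Rightarrow> 'a) \<Rightarrow> 'a \<Rightarrow> 'a" where
  "univ_pi h q pe u X = pe * X + (\<Sum>j\<in>{1..<h}. u j * X ^ (q ^ j)) + X ^ (q ^ h)"

definition univ_pi_pow :: "nat \<Rightarrow> nat \<Rightarrow> 'a::comm_ring_1 \<Rightarrow> (nat \<Rightarrow> 'a) \<Rightarrow> nat \<Rightarrow> 'a \<Rightarrow> 'a" where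
  "univ_pi_pow h q pe u a = (univ_pi h q pe u) ^^ a"

text \<open>[pe] for the Lubin-Tate module LT (additive group law).\<close>
definition lt_pi :: "nat \<Rightarrow> nat \<Rightarrow> 'a::comm_ring_1 \<Rightarrow> 'a \<Rightarrow> 'a" where
  "lt_pi h q pe X = pe * X + (-1) ^ (h - 1) * X ^ q"

definition lt_pi_pow :: "nat \<Rightarrow> nat \<Rightarrow> 'a::comm_ring_1 \<Rightarrow> nat \<Rightarrow> 'a \<Rightarrow> 'a" where
  "lt_pi_pow h q pe a = (lt_pi h q pe) ^^ a"

text \<open>Moore determinant mu(X_1,...,X_h) = det (X_i^(q^j)), rows i = 1..h (indexed 0..h-1),
  columns j = 0..h-1.\<close>
definition moore :: "nat \<Rightarrow> nat \<Rightarrow> (nat \<Rightarrow> 'a::comm_ring_1) \<Rightarrow> 'a" where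
  "moore h q X = det (mat h h (\<lambda>(i, j). X i ^ (q ^ j)))"

definition mu_tuples :: "nat \<Rightarrow> nat \<Rightarrow> (nat \<Rightarrow> nat) set" where
  "mu_tuples h n = {a. (\<forall>i<h. a i < n) \<and> (\<forall>i\<ge>h. a i = 0) \<and>
                        (\<Sum>i<h. a i) = (h - 1) * (n - 1)}"

definition mu_n :: "nat \<Rightarrow> nat \<Rightarrow> 'a::comm_ring_1 \<Rightarrow> (nat \<Rightarrow> 'a) \<Rightarrow> nat \<Rightarrow> (nat \<Rightarrow> 'a) \<Rightarrow> 'a" where
  "mu_n h q pe u n X =
     (\<Sum>a\<in>mu_tuples h n. moore h q (\<lambda>i. univ_pi_pow h q pe u (a i) (X i)))"

end

theory Submission
  imports Defs "HOL-Computational_Algebra.Primes"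
begin

definition GG :: "nat \<Rightarrow> nat \<Rightarrow> (nat \<Rightarrow> 'a::comm_ring_1) \<Rightarrow> (nat \<Rightarrow> 'a) \<Rightarrow> 'a" where
  "GG h q Z Y = det (mat h h (\<lambda>(i,c). if c = 0 then Z i else Y i ^ q^c))"

definition NM :: "nat \<Rightarrow> nat \<Rightarrow> nat \<Rightarrow> (nat \<Rightarrow> 'a::comm_ring_1) \<Rightarrow> 'a" where
  "NM h q i Y = det (mat (h-1) (h-1) (\<lambda>(k,j). Y (insert_index i k) ^ q^(Suc j)))"

lemma GG_exp:
  assumes "h \<ge> 1"
  shows "GG h q Z Y = (\<Sum>i<h. Z i * ((-1)^i * NM h q i Y))"
proof -
  let ?A = "mat h h (\<lambda>(i,c). if c = 0 then Z i else Y i ^ q^c)"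
  have "GG h q Z Y = (\<Sum>i<h. ?A $$ (i,0) * cofactor ?A i 0)" unfolding GG_def
    by (rule laplace_expansion_column) (use assms in auto)
  also have "\<dots> = (\<Sum>i<h. Z i * ((-1)^i * NM h q i Y))"
  proof (rule sum.cong[OF refl])
    fix i assume i: "i \<in> {..<h}"
    have "mat_delete ?A i 0 = mat (h-1) (h-1) (\<lambda>(k,j). Y (insert_index i k) ^ q^(Suc j))"
      apply (rule eq_matI) using i by (auto simp: mat_delete_def insert_index_def)
    then show "?A $$ (i,0) * cofactor ?A i 0 = Z i * ((-1)^i * NM h q i Y)"
      using i by (simp add: cofactor_def NM_def)
  qed
  finally show ?thesis .
qed

lemma moore_GG: "moore h q Y = GG h q Y Y"
  unfolding moore_def GG_def
  by (rule arg_cong[of _ _ det], rule eq_matI) auto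

lemma GG_zero:
  assumes "1 \<le> j" "j < h"
  shows "GG h q (\<lambda>i. Y i ^ q^j) Y = 0"
  unfolding GG_def
  by (rule det_identical_columns[of _ h 0 j]) (use assms in \<open>auto simp: col_def\<close>)

lemma NM_cong:
  assumes "i < h" "\<And>k. k < h \<Longrightarrow> k \<noteq> i \<Longrightarrow> Y k = Y' k"
  shows "NM h q i Y = NM h q i Y'"
  unfolding NM_def
  by (rule arg_cong[of _ _ det], rule eq_matI) (use assms in \<open>auto simp: insert_index_def\<close>)

lemma frob_moore:
  fixes Y :: "nat \<Rightarrow> 'a::comm_ring_1"
  assumes "prime CHAR('a)" "q = CHAR('a)^f" "h \<ge> 1"
  shows "(moore h q Y)^q = (-1)^(h-1) * GG h q (\<lambda>i. Y i ^ q^h) Y"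
proof -
  have q0: "q > 0" using assms(1,2) prime_gt_0_nat by simp
  interpret fr: comm_ring_hom "\<lambda>x::'a. x^q"
    by unfold_locales (use q0 in \<open>auto simp: power_0_left power_mult_distrib freshmans_dream'[OF assms(1,2)]\<close>)
  let ?M = "mat h h (\<lambda>(i,j). Y i ^ q^j)"
  let ?M' = "mat h h (\<lambda>(i,j). Y i ^ q^(Suc j))"
  have "(moore h q Y)^q = det (map_mat (\<lambda>x. x^q) ?M)" unfolding moore_def by simp
  also have "map_mat (\<lambda>x. x^q) ?M = ?M'"
    by (rule eq_matI) (auto simp: power_mult[symmetric] mult.commute)
  also have "det ?M' = (\<Sum>i<h. ?M' $$ (i,h-1) * cofactor ?M' i (h-1))"
    by (rule laplace_expansion_column) (use assms in auto)
  also have "\<dots> = (\<Sum>i<h. Y i ^ q^h * ((-1)^(h-1) * ((-1)^i * NM h q i Y)))"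
  proof (rule sum.cong[OF refl])
    fix i assume i: "i \<in> {..<h}"
    have "mat_delete ?M' i (h-1) = mat (h-1) (h-1) (\<lambda>(k,j). Y (insert_index i k) ^ q^(Suc j))"
      apply (rule eq_matI) using i by (auto simp: mat_delete_def insert_index_def)
    moreover have "?M' $$ (i,h-1) = Y i ^ q^h"
    proof -
      have "Suc (h-1) = h" using assms(3) by simp
      then show ?thesis using i by (simp del: power_Suc add: power_Suc[symmetric])
    qed
    moreover have "(-1::'a)^(i+(h-1)) = (-1)^i * (-1)^(h-1)" by (simp add: power_add)
    ultimately show "?M' $$ (i,h-1) * cofactor ?M' i (h-1) = Y i ^ q^h * ((-1)^(h-1) * ((-1)^i * NM h q i Y))"
      unfolding cofactor_def NM_def by (simp only: mult_ac)
  qed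
  also have "\<dots> = (-1)^(h-1) * GG h q (\<lambda>i. Y i ^ q^h) Y"
    by (simp add: GG_exp[OF assms(3)] sum_distrib_left mult_ac)
  finally show ?thesis .
qed

lemma lt_moore:
  fixes Y :: "nat \<Rightarrow> 'a::comm_ring_1"
  assumes "prime CHAR('a)" "q = CHAR('a)^f" "h \<ge> 1"
  shows "lt_pi h q pe (moore h q Y) = GG h q (\<lambda>i. univ_pi h q pe u (Y i)) Y"
proof -
  define c where "c = (\<lambda>i. (-1)^i * NM h q i Y :: 'a)"
  have A: "GG h q (\<lambda>i. univ_pi h q pe u (Y i)) Y = pe * GG h q Y Y
     + (\<Sum>j\<in>{1..<h}. u j * GG h q (\<lambda>i. Y i ^ q^j) Y) + GG h q (\<lambda>i. Y i^q^h) Y"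
  proof -
    have "GG h q (\<lambda>i. univ_pi h q pe u (Y i)) Y =
       (\<Sum>i<h. pe * (Y i * c i) + (\<Sum>j\<in>{1..<h}. u j * (Y i ^ q^j * c i)) + Y i^q^h * c i)"
      unfolding GG_exp[OF assms(3)] univ_pi_def
      by (rule sum.cong[OF refl]) (simp add: c_def algebra_simps sum_distrib_right sum_distrib_left)
    also have "\<dots> = pe * (\<Sum>i<h. Y i * c i) + (\<Sum>j\<in>{1..<h}. u j * (\<Sum>i<h. Y i ^ q^j * c i))
        + (\<Sum>i<h. Y i^q^h * c i)"
      by (simp add: sum.distrib sum_distrib_left, rule sum.swap)
    finally show ?thesis unfolding GG_exp[OF assms(3)] c_def by simp
  qed
  have B: "(\<Sum>j\<in>{1..<h}. u j * GG h q (\<lambda>i. Y i ^ q^j) Y) = 0"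
    by (rule sum.neutral) (auto simp: GG_zero)
  have C: "(-1::'a)^(h-1) * (-1)^(h-1) = 1"
    by (simp add: power_mult_distrib[symmetric])
  show ?thesis
    unfolding lt_pi_def frob_moore[OF assms] A B moore_GG[symmetric]
    by (simp add: mult.assoc[symmetric] C)
qed

lemma mu_tuples_finite: "finite (mu_tuples h n)"
proof -
  have "mu_tuples h n \<subseteq> {f. \<forall>x. (x \<in> {..<h} \<longrightarrow> f x \<in> {..<n}) \<and> (x \<notin> {..<h} \<longrightarrow> f x = 0)}"
    unfolding mu_tuples_def by auto
  then show ?thesis by (rule finite_subset) (rule finite_set_of_finite_funs, auto)
qed

lemma mu_tuples_iff: "a \<in> mu_tuples h n \<longleftrightarrow> (\<forall>i<h. a i < n) \<and> (\<forall>i\<ge>h. a i = 0) \<and>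
                        (\<Sum>i<h. a i) = (h - 1) * (n - 1)"
  unfolding mu_tuples_def by simp

lemma sum_g:
  fixes b :: "nat \<Rightarrow> nat"
  assumes "i < h"
  shows "(\<Sum>k<h. (if k<h \<and> k\<noteq>i then b k + 1 else b k)) = (\<Sum>k<h. b k) + (h-1)"
proof -
  have "(\<Sum>k<h. (if k<h \<and> k\<noteq>i then b k + 1 else b k)) = (\<Sum>k<h. b k + (if k \<noteq> i then 1 else 0))"
    by (rule sum.cong) auto
  also have "\<dots> = (\<Sum>k<h. b k) + (\<Sum>k<h. (if k \<noteq> i then 1 else 0))"
    by (simp add: sum.distrib)
  also have "(\<Sum>k<h. (if k \<noteq> i then 1 else 0::nat)) = h - 1"
  proof -
    have "(\<Sum>k<h. (if k \<noteq> i then 1 else 0::nat)) = (if i \<noteq> i then 1 else 0) + (\<Sum>k\<in>{..<h}-{i}. (if k \<noteq> i then 1 else 0::nat))"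
      by (rule sum.remove) (use assms in auto)
    also have "\<dots> = card ({..<h}-{i})" by simp
    also have "\<dots> = h - 1" using assms by simp
    finally show ?thesis .
  qed
  finally show ?thesis .
qed

lemma pos_coord:
  assumes a: "a \<in> mu_tuples h n" and i: "i < h" "a i < n - 1" and k: "k < h" "k \<noteq> i"
  shows "a k \<ge> 1"
proof (rule ccontr)
  assume "\<not> a k \<ge> 1"
  then have ak: "a k = 0" by simp
  from a have al: "\<forall>j<h. a j < n" and as: "(\<Sum>j<h. a j) = (h - 1) * (n - 1)"
    by (auto simp: mu_tuples_iff)
  define c where "c = (\<lambda>j. a j + (if j = i then 1 else 0) + (if j = k then n-1 else 0))"
  have "\<And>j. j\<in>{..<h} \<Longrightarrow> c j \<le> n - 1" using al i k ak unfolding c_def by force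
  then have "sum c {..<h} \<le> of_nat (card {..<h}) * (n-1)" by (rule sum_bounded_above)
  moreover have "sum c {..<h} = (\<Sum>j<h. a j) + 1 + (n-1)"
    unfolding c_def using i k by (simp add: sum.distrib)
  moreover have "h*(n-1) = (h-1)*(n-1) + (n-1)" using i by (cases h) auto
  ultimately show False using as i by simp arith
qed

definition gsh :: "nat \<Rightarrow> nat \<Rightarrow> (nat \<Rightarrow> nat) \<Rightarrow> nat \<Rightarrow> nat" where
  "gsh h i b = (\<lambda>k. if k<h \<and> k\<noteq>i then b k + 1 else b k)"

lemma gsh_inj: "inj_on (gsh h i) A"
proof (rule inj_onI)
  fix b b' assume "gsh h i b = gsh h i b'"
  then have "\<And>k. gsh h i b k = gsh h i b' k" by simp
  then show "b = b'" unfolding gsh_def by (intro ext) (metis add_right_cancel)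
qed

lemma gsh_image:
  assumes i: "i < h" and n: "n \<ge> 1"
  shows "gsh h i ` mu_tuples h (n-1) = mu_tuples h n \<inter> {a. a i < n - 1}"
proof (intro Set.set_eqI iffI)
  fix a assume "a \<in> gsh h i ` mu_tuples h (n-1)"
  then obtain b where b: "b \<in> mu_tuples h (n-1)" and a: "a = gsh h i b" by blast
  from b have bl: "\<forall>k<h. b k < n-1" and bz: "\<forall>k\<ge>h. b k = 0" and bs: "(\<Sum>k<h. b k) = (h-1)*(n-1-1)"
    by (auto simp: mu_tuples_iff)
  have n2: "n - 1 = Suc (n-1-1)" using bl i by force
  have "(\<Sum>k<h. a k) = (h-1)*(n-1-1) + (h-1)" using sum_g[OF i, of b] bs unfolding a gsh_def by simp
  also have "\<dots> = (h-1)*(n-1)" by (subst n2) simp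
  finally have "(\<Sum>k<h. a k) = (h-1)*(n-1)" .
  moreover have "\<forall>k<h. a k < n" using bl n2 unfolding a gsh_def by (auto; metis Suc_less_eq less_Suc_eq)
  moreover have "\<forall>k\<ge>h. a k = 0" using bz unfolding a gsh_def by auto
  moreover have "a i < n-1" using bl i unfolding a gsh_def by auto
  ultimately show "a \<in> mu_tuples h n \<inter> {a. a i < n - 1}" by (simp add: mu_tuples_iff)
next
  fix a assume a: "a \<in> mu_tuples h n \<inter> {a. a i < n - 1}"
  then have am: "a \<in> mu_tuples h n" and ai: "a i < n - 1" by auto
  from am have al: "\<forall>k<h. a k < n" and az: "\<forall>k\<ge>h. a k = 0" and as: "(\<Sum>k<h. a k) = (h-1)*(n-1)"
    by (auto simp: mu_tuples_iff)
  have pos: "\<And>k. k < h \<Longrightarrow> k \<noteq> i \<Longrightarrow> a k \<ge> 1" using pos_coord[OF am i ai] by blast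
  define b where "b = (\<lambda>k. if k<h \<and> k\<noteq>i then a k - 1 else a k)"
  have gb: "gsh h i b = a" unfolding gsh_def b_def using pos by (intro ext) (simp add: Suc_pred' less_eq_Suc_le)
  have n2: "n - 1 = Suc (n-1-1)" using ai by simp
  have "(\<Sum>k<h. b k) + (h-1) = (\<Sum>k<h. gsh h i b k)" using sum_g[OF i, of b] unfolding gsh_def by simp
  also have "\<dots> = (h-1)*(n-1)" using gb as by simp
  also have "\<dots> = (h-1)*(n-1-1) + (h-1)" by (subst n2) simp
  finally have "(\<Sum>k<h. b k) = (h-1)*(n-1-1)" by simp
  moreover have "\<forall>k<h. b k < n - 1" using al ai pos unfolding b_def by (auto; metis One_nat_def Suc_pred diff_less_mono le_eq_less_or_eq less_one not_less_eq)
  moreover have "\<forall>k\<ge>h. b k = 0" using az unfolding b_def by auto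
  ultimately have "b \<in> mu_tuples h (n-1)" by (simp add: mu_tuples_iff)
  then show "a \<in> gsh h i ` mu_tuples h (n-1)" using gb by blast
qed

lemma pow_Suc_shift: "univ_pi_pow h q pe u (Suc m) x = univ_pi_pow h q pe u m (univ_pi h q pe u x)"
  unfolding univ_pi_pow_def by (simp add: funpow_Suc_right del: funpow.simps)

lemma pow_Suc: "univ_pi_pow h q pe u (Suc m) x = univ_pi h q pe u (univ_pi_pow h q pe u m x)"
  unfolding univ_pi_pow_def by simp

lemma reindex:
  fixes X :: "nat \<Rightarrow> 'a::comm_ring_1"
  assumes h: "h \<ge> 1" and n: "n \<ge> 1" and i: "i < h"
    and X0: "\<forall>k<h. univ_pi_pow h q pe u n (X k) = 0"
  shows "(\<Sum>a\<in>mu_tuples h n. univ_pi_pow h q pe u (Suc (a i)) (X i) *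
            ((-1)^i * NM h q i (\<lambda>k. univ_pi_pow h q pe u (a k) (X k))))
       = (\<Sum>b\<in>mu_tuples h (n-1). univ_pi_pow h q pe u (b i) (univ_pi h q pe u (X i)) *
            ((-1)^i * NM h q i (\<lambda>k. univ_pi_pow h q pe u (b k) (univ_pi h q pe u (X k)))))"
    (is "sum ?t _ = sum ?r _")
proof -
  have "sum ?t (mu_tuples h n) = sum ?t (mu_tuples h n \<inter> {a. a i < n-1})"
  proof (rule sum.mono_neutral_right[OF mu_tuples_finite])
    show "\<forall>a\<in>mu_tuples h n - mu_tuples h n \<inter> {a. a i < n - 1}. ?t a = 0"
    proof
      fix a assume "a \<in> mu_tuples h n - mu_tuples h n \<inter> {a. a i < n - 1}"
      then have "a i < n" "\<not> a i < n - 1" using i by (auto simp: mu_tuples_iff)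
      then have "Suc (a i) = n" by simp
      then show "?t a = 0" using X0 i by simp
    qed
  qed auto
  also have "\<dots> = sum ?t (gsh h i ` mu_tuples h (n-1))" using gsh_image[OF i n] by simp
  also have "\<dots> = sum (?t \<circ> gsh h i) (mu_tuples h (n-1))" by (rule sum.reindex[OF gsh_inj])
  also have "\<dots> = sum ?r (mu_tuples h (n-1))"
  proof (rule sum.cong[OF refl])
    fix b assume "b \<in> mu_tuples h (n-1)"
    have gi: "gsh h i b i = b i" unfolding gsh_def by simp
    have "NM h q i (\<lambda>k. univ_pi_pow h q pe u (gsh h i b k) (X k)) =
          NM h q i (\<lambda>k. univ_pi_pow h q pe u (b k) (univ_pi h q pe u (X k)))"
      by (rule NM_cong[OF i]) (simp add: gsh_def pow_Suc_shift)
    then show "(?t \<circ> gsh h i) b = ?r b" by (simp add: gi pow_Suc_shift)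
  qed
  finally show ?thesis .
qed

lemma lt_sum:
  fixes f :: "'b \<Rightarrow> 'a::comm_ring_1"
  assumes "prime CHAR('a)" "q = CHAR('a)^fe"
  shows "lt_pi h q pe (sum f A) = (\<Sum>a\<in>A. lt_pi h q pe (f a))"
  unfolding lt_pi_def freshmans_dream_sum'[OF assms]
  by (simp add: sum.distrib sum_distrib_left)

lemma main_identity:
  fixes X :: "nat \<Rightarrow> 'a::comm_ring_1"
  assumes c: "prime CHAR('a)" "q = CHAR('a)^fe" and h: "h \<ge> 1" and n: "n \<ge> 1"
    and X0: "\<forall>k<h. univ_pi_pow h q pe u n (X k) = 0"
  shows "lt_pi h q pe (mu_n h q pe u n X) = mu_n h q pe u (n - 1) (\<lambda>i. univ_pi h q pe u (X i))"
proof -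
  let ?P = "univ_pi_pow h q pe u"
  let ?F = "univ_pi h q pe u"
  have "lt_pi h q pe (mu_n h q pe u n X) = (\<Sum>a\<in>mu_tuples h n. lt_pi h q pe (moore h q (\<lambda>i. ?P (a i) (X i))))"
    unfolding mu_n_def by (rule lt_sum[OF c])
  also have "\<dots> = (\<Sum>a\<in>mu_tuples h n. \<Sum>i<h. ?P (Suc (a i)) (X i) *
            ((-1)^i * NM h q i (\<lambda>k. ?P (a k) (X k))))"
    by (rule sum.cong[OF refl]) (simp add: lt_moore[OF c h, where u=u] GG_exp[OF h] pow_Suc)
  also have "\<dots> = (\<Sum>i<h. \<Sum>a\<in>mu_tuples h n. ?P (Suc (a i)) (X i) *
            ((-1)^i * NM h q i (\<lambda>k. ?P (a k) (X k))))"
    by (rule sum.swap)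
  also have "\<dots> = (\<Sum>i<h. \<Sum>b\<in>mu_tuples h (n-1). ?P (b i) (?F (X i)) *
            ((-1)^i * NM h q i (\<lambda>k. ?P (b k) (?F (X k)))))"
    by (rule sum.cong[OF refl]) (rule reindex[OF h n _ X0], simp)
  also have "\<dots> = (\<Sum>b\<in>mu_tuples h (n-1). \<Sum>i<h. ?P (b i) (?F (X i)) *
            ((-1)^i * NM h q i (\<lambda>k. ?P (b k) (?F (X k)))))"
    by (rule sum.swap)
  also have "\<dots> = mu_n h q pe u (n - 1) (\<lambda>i. ?F (X i))"
    unfolding mu_n_def by (rule sum.cong[OF refl]) (simp add: moore_GG GG_exp[OF h])
  finally show ?thesis .
qed

lemma mu_n_zero: "h \<ge> 1 \<Longrightarrow> mu_n h q pe u 0 X = 0"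
proof -
  assume "h \<ge> 1"
  then have "\<forall>a. \<not> (\<forall>i<h. a i < (0::nat))" by (auto intro!: exI[of _ 0])
  then have "mu_tuples h 0 = {}" unfolding mu_tuples_def by blast
  then show ?thesis unfolding mu_n_def by simp
qed

lemma torsion:
  fixes X :: "nat \<Rightarrow> 'a::comm_ring_1"
  assumes c: "prime CHAR('a)" "q = CHAR('a)^fe" and h: "h \<ge> 1"
  shows "(\<forall>k<h. univ_pi_pow h q pe u m (X k) = 0) \<Longrightarrow> lt_pi_pow h q pe m (mu_n h q pe u m X) = 0"
proof (induction m arbitrary: X)
  case 0
  then show ?case by (simp add: mu_n_zero[OF h] lt_pi_pow_def)
next
  case (Suc m)
  have X1: "\<forall>k<h. univ_pi_pow h q pe u m (univ_pi h q pe u (X k)) = 0"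
    using Suc.prems by (simp add: pow_Suc_shift)
  have "lt_pi_pow h q pe (Suc m) (mu_n h q pe u (Suc m) X)
      = lt_pi_pow h q pe m (lt_pi h q pe (mu_n h q pe u (Suc m) X))"
    unfolding lt_pi_pow_def by (simp add: funpow_Suc_right del: funpow.simps)
  also have "\<dots> = lt_pi_pow h q pe m (mu_n h q pe u m (\<lambda>i. univ_pi h q pe u (X i)))"
    using main_identity[OF c h _ Suc.prems] by simp
  also have "\<dots> = 0" by (rule Suc.IH[OF X1])
  finally show ?case .
qed

theorem proposition3p7:
  fixes R_pi :: "'a::comm_ring_1" and u :: "nat \<Rightarrow> 'a" and X :: "nat \<Rightarrow> 'a"
    and h n p f q :: nat
  assumes "prime p" and "CHAR('a) = p" and "f \<ge> 1" and "q = p ^ f"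
    and "h \<ge> 1" and "n \<ge> 1"
    and "\<forall>i<h. univ_pi_pow h q R_pi u n (X i) = 0"
  shows "lt_pi h q R_pi (mu_n h q R_pi u n X)
           = mu_n h q R_pi u (n - 1) (\<lambda>i. univ_pi h q R_pi u (X i))
       \<and> lt_pi_pow h q R_pi n (mu_n h q R_pi u n X) = 0"
proof -
  have c: "prime CHAR('a)" "q = CHAR('a)^f" using assms by auto
  show ?thesis
    using main_identity[OF c assms(5,6,7)] torsion[OF c assms(5) assms(7)] by simp
qed

end
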